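(* Let $n\ge2$, $\alpha\in(-n,0)$ and let $\phi$ be a Young function satisfying $\underline\Lambda_\phi(\alpha)<\infty$ and $\overline\Lambda_\phi(\alpha)<\infty$. Suppose $\Omega\subset\mathbb R^n$ is a globally $n$-regular domain with constant $\theta$. Then there exists a constant $C>0$ depending only on $n,\alpha,\phi,\theta$ such that $$\|u\|_{L^{n/|\alpha|}(\Omega)}\le C\|u\|_{\dot{\mathbf B}^{\alpha,\phi}(\Omega)}$$ whenever $u\in\dot{\mathbf B}^{\alpha,\phi}(\Omega)$ satisfies: if $|\Omega|<\infty$, $u\ge0$ in $\Omega$ and $|\{x\in\Omega:u(x)=0\}|\ge\frac12|\Omega|$; if $|\Omega|=\infty$, $u\ge0$ in $\Omega$ and $|\{x\in\Omega:u(x)>a\}|<\infty$ for every $a>0$.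
   Context: A Young function is $\phi\in C([0,\infty))$, convex, with $\phi(0)=0$, $\phi(t)>0$ for $t>0$, $\lim_{t\to\infty}\phi(t)=\infty$. $\underline\Lambda_\phi(\alpha):=\sup_{x>0}\int_0^1\frac{\phi(t^{1-\alpha}x)}{\phi(x)}\frac{dt}{t^{n+1}}$, $\overline\Lambda_\phi(\alpha):=\sup_{x>0}\int_1^\infty\frac{\phi(t^{-\alpha}x)}{\phi(x)}\frac{dt}{t^{n+1}}$. $\dot{\mathbf B}^{\alpha,\phi}(\Omega)$ is the space of measurable $u$ on $\Omega$ with finite $\|u\|_{\dot{\mathbf B}^{\alpha,\phi}(\Omega)}:=\inf\{\lambda>0:\int_\Omega\int_\Omega\phi(\frac{|u(x)-u(y)|}{\lambda|x-y|^{\alpha}})\frac{dx\,dy}{|x-y|^{2n}}\le1\}$. A domain $\Omega$ is globally $n$-regular (with constant $\theta\in(0,1)$) if $|B(x,r)\cap\Omega|\ge\theta r^n$ for all $x\in\Omega$ and all $0<r<2\operatorname{diam}\Omega$. *)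

theory Defs
  imports "HOL-Analysis.Analysis"
begin

definition young_function :: "(real \<Rightarrow> real) \<Rightarrow> bool" where
  "young_function \<phi> \<longleftrightarrow>
     continuous_on {0..} \<phi> \<and> convex_on {0..} \<phi> \<and> \<phi> 0 = 0 \<and>
     (\<forall>t>0. \<phi> t > 0) \<and> filterlim \<phi> at_top at_top"

definition Lambda_lower :: "nat \<Rightarrow> (real \<Rightarrow> real) \<Rightarrow> real \<Rightarrow> ennreal" where
  "Lambda_lower n \<phi> \<alpha> =
     (SUP x\<in>{0<..}. \<integral>\<^sup>+ t\<in>{0<..<1}.
        ennreal (\<phi> (t powr (1 - \<alpha>) * x) / \<phi> x / t ^ (n + 1)) \<partial>lborel)"

definition Lambda_upper :: "nat \<Rightarrow> (real \<Rightarrow> real) \<Rightarrow> real \<Rightarrow> ennreal" where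
  "Lambda_upper n \<phi> \<alpha> =
     (SUP x\<in>{0<..}. \<integral>\<^sup>+ t\<in>{1<..}.
        ennreal (\<phi> (t powr (- \<alpha>) * x) / \<phi> x / t ^ (n + 1)) \<partial>lborel)"

definition besov_modular ::
  "real \<Rightarrow> (real \<Rightarrow> real) \<Rightarrow> 'a::euclidean_space set \<Rightarrow> ('a \<Rightarrow> real) \<Rightarrow> real \<Rightarrow> ennreal" where
  "besov_modular \<alpha> \<phi> \<Omega> u lam =
     (\<integral>\<^sup>+ x\<in>\<Omega>. (\<integral>\<^sup>+ y\<in>\<Omega>.
        ennreal (\<phi> (\<bar>u x - u y\<bar> / (lam * dist x y powr \<alpha>)) / dist x y ^ (2 * DIM('a)))
      \<partial>lebesgue) \<partial>lebesgue)"

definition besov_norm ::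
  "real \<Rightarrow> (real \<Rightarrow> real) \<Rightarrow> 'a::euclidean_space set \<Rightarrow> ('a \<Rightarrow> real) \<Rightarrow> real" where
  "besov_norm \<alpha> \<phi> \<Omega> u = Inf {lam. lam > 0 \<and> besov_modular \<alpha> \<phi> \<Omega> u lam \<le> 1}"

definition in_besov ::
  "real \<Rightarrow> (real \<Rightarrow> real) \<Rightarrow> 'a::euclidean_space set \<Rightarrow> ('a \<Rightarrow> real) \<Rightarrow> bool" where
  "in_besov \<alpha> \<phi> \<Omega> u \<longleftrightarrow>
     set_borel_measurable lebesgue \<Omega> u \<and>
     (\<exists>lam>0. besov_modular \<alpha> \<phi> \<Omega> u lam \<le> 1)"

definition Lp_norm :: "'a::euclidean_space set \<Rightarrow> real \<Rightarrow> ('a \<Rightarrow> real) \<Rightarrow> ennreal" where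
  "Lp_norm \<Omega> p u =
     (let I = (\<integral>\<^sup>+ x\<in>\<Omega>. ennreal (\<bar>u x\<bar> powr p) \<partial>lebesgue)
      in if I = \<infinity> then \<infinity> else ennreal (enn2real I powr (1 / p)))"

text \<open>Domain = nonempty open connected set. Globally n-regular with constant theta;
  diam = infinity for unbounded sets.\<close>
definition globally_regular :: "real \<Rightarrow> 'a::euclidean_space set \<Rightarrow> bool" where
  "globally_regular \<theta> \<Omega> \<longleftrightarrow>
     (\<forall>x\<in>\<Omega>. \<forall>r. 0 < r \<and> (\<not> bounded \<Omega> \<or> r < 2 * diameter \<Omega>) \<longrightarrow>
        emeasure lebesgue (ball x r \<inter> \<Omega>) \<ge> ennreal (\<theta> * r ^ DIM('a)))"

end

theory Submission
  imports Defs
begin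


lemma yf_scale:
  assumes "young_function \<phi>" "0 \<le> s" "s \<le> 1" "0 \<le> x"
  shows "\<phi> (s * x) \<le> s * \<phi> x"
proof -
  have cv: "convex_on {0..} \<phi>" and z: "\<phi> 0 = 0" using assms(1) by (auto simp: young_function_def)
  have "\<phi> ((1 - s) *\<^sub>R 0 + s *\<^sub>R x) \<le> (1 - s) * \<phi> 0 + s * \<phi> x"
    by (rule convex_onD[OF cv]) (use assms in auto)
  then show ?thesis using z by simp
qed

lemma yf_nonneg:
  assumes "young_function \<phi>" "0 \<le> x" shows "0 \<le> \<phi> x"
proof (cases "x = 0")
  case True then show ?thesis using assms by (simp add: young_function_def)
next
  case False then have "x > 0" using assms by simp
  then show ?thesis using assms by (auto simp: young_function_def intro: less_imp_le)
qed

lemma yf_pos: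
  assumes "young_function \<phi>" "0 < x" shows "0 < \<phi> x"
  using assms by (auto simp: young_function_def)

lemma yf_mono:
  assumes "young_function \<phi>" "0 \<le> a" "a \<le> b" shows "\<phi> a \<le> \<phi> b"
proof (cases "b = 0")
  case True then show ?thesis using assms by simp
next
  case False
  then have b: "b > 0" using assms by simp
  have "\<phi> a = \<phi> ((a/b) * b)" using b by simp
  also have "\<dots> \<le> (a/b) * \<phi> b" by (rule yf_scale) (use assms b in auto)
  also have "\<dots> \<le> \<phi> b" using assms b yf_nonneg[OF assms(1), of b]
    by (intro mult_left_le_one_le) auto
  finally show ?thesis .
qed

lemma upper_type:
  fixes \<phi> :: "real \<Rightarrow> real" and \<alpha> :: real
  assumes yf: "young_function \<phi>" and al: "\<alpha> < 0" and L: "Lambda_upper n \<phi> \<alpha> < \<infinity>"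
  shows "\<exists>Cu\<ge>1. \<forall>x>0. \<forall>T\<ge>1. \<phi> (T powr (-\<alpha>) * x) \<le> Cu * T ^ n * \<phi> x"
proof -
  define Lr where "Lr = enn2real (Lambda_upper n \<phi> \<alpha>)"
  have LL: "Lambda_upper n \<phi> \<alpha> = ennreal Lr" using L unfolding Lr_def
    by (simp add: less_top[symmetric] ennreal_enn2real_if)
  have main: "\<phi> (T powr (-\<alpha>) * x) \<le> (Lr * 2 ^ (n+1)) * T ^ n * \<phi> x" if x: "x > 0" and T: "T \<ge> 1" for x T
  proof -
    define c where "c = \<phi> (T powr (-\<alpha>) * x) / \<phi> x / (2*T) ^ (n+1)"
    have px: "\<phi> x > 0" using yf_pos[OF yf x] .
    have c0: "c \<ge> 0" unfolding c_def using yf_nonneg[OF yf, of "T powr (-\<alpha>) * x"] px T x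
      by auto
    have pw: "ennreal c * indicator {T<..<2*T} t \<le> ennreal (\<phi> (t powr (- \<alpha>) * x) / \<phi> x / t ^ (n + 1)) * indicator {1<..} t" for t
    proof (cases "t \<in> {T<..<2*T}")
      case True
      then have t: "T < t" "t < 2*T" by auto
      have t1: "t > 1" using t T by auto
      have "\<phi> (T powr (-\<alpha>) * x) \<le> \<phi> (t powr (-\<alpha>) * x)"
        apply (rule yf_mono[OF yf]) using x T t al by (auto intro!: mult_right_mono powr_mono2)
      moreover have "t ^ (n+1) \<le> (2*T) ^ (n+1)" using t T by (intro power_mono) auto
      ultimately have "c \<le> \<phi> (t powr (- \<alpha>) * x) / \<phi> x / t ^ (n + 1)"
        unfolding c_def using px t1 T yf_nonneg[OF yf, of "T powr (-\<alpha>) * x"] x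
        by (intro frac_le divide_right_mono) auto
      then show ?thesis using True t1 by (auto intro: ennreal_leI)
    qed simp
    have "ennreal c * ennreal T = (\<integral>\<^sup>+ t. ennreal c * indicator {T<..<2*T} t \<partial>lborel)"
      using T by (simp add: nn_integral_cmult_indicator)
    also have "\<dots> \<le> (\<integral>\<^sup>+ t\<in>{1<..}. ennreal (\<phi> (t powr (1 - 1 - \<alpha>) * x) / \<phi> x / t ^ (n + 1)) \<partial>lborel)"
      by (rule nn_integral_mono) (use pw in simp)
    also have "\<dots> \<le> Lambda_upper n \<phi> \<alpha>" unfolding Lambda_upper_def
      by (rule SUP_upper2[of x]) (use x in auto)
    finally have "ennreal (c * T) \<le> ennreal Lr" using LL c0 T by (simp add: ennreal_mult)
    then have "c * T \<le> Lr" using ennreal_le_iff[of Lr "c*T"] by (simp add: Lr_def)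
    then have "\<phi> (T powr (-\<alpha>) * x) / \<phi> x / (2*T) ^ (n+1) * T \<le> Lr" unfolding c_def .
    then have "\<phi> (T powr (-\<alpha>) * x) \<le> Lr * (2*T) ^ (n+1) / T * \<phi> x"
      using px T by (simp add: field_simps)
    also have "Lr * (2*T) ^ (n+1) / T = Lr * 2 ^ (n+1) * T ^ n"
      using T by (simp add: power_mult_distrib field_simps)
    finally show ?thesis by simp
  qed
  show ?thesis
    apply (rule exI[of _ "max 1 (Lr * 2 ^ (n+1))"])
    apply (intro conjI allI impI)
     apply simp
    apply (rule order.trans[OF main], assumption, assumption)
    apply (rule mult_right_mono)+
      apply (auto intro: yf_nonneg[OF yf])
    done
qed

lemma geom_sum:
  fixes c E :: real
  assumes "0 < c" "0 \<le> E"
  shows "(\<Sum>k<N. if c * 2 ^ k \<le> E then c * 2 ^ k else 0) \<le> 2 * E"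
proof -
  have "(\<Sum>k<N. if c * 2 ^ k \<le> E then c * 2 ^ k else 0) \<le> c * 2 ^ N - c \<and>
        (\<Sum>k<N. if c * 2 ^ k \<le> E then c * 2 ^ k else 0) \<le> 2 * E"
  proof (induction N)
    case 0 then show ?case using assms by simp
  next
    case (Suc N)
    let ?S = "(\<Sum>k<N. if c * 2 ^ k \<le> E then c * 2 ^ k else 0)"
    have eq: "(\<Sum>k<Suc N. if c * 2 ^ k \<le> E then c * 2 ^ k else 0) = ?S + (if c * 2 ^ N \<le> E then c * 2 ^ N else 0)"
      by simp
    have p: "c * 2 ^ Suc N = 2 * (c * 2 ^ N)" by simp
    have "c * 2 ^ N \<ge> c" using assms by simp
    show ?case
    proof (cases "c * 2 ^ N \<le> E")
      case True
      then have "(if c * 2 ^ N \<le> E then c * 2 ^ N else 0) = c * 2 ^ N" by simp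
      then show ?thesis unfolding eq p using Suc.IH True assms \<open>c * 2 ^ N \<ge> c\<close> by (intro conjI) linarith+
    next
      case False
      then have "(if c * 2 ^ N \<le> E then c * 2 ^ N else 0) = 0" by simp
      then show ?thesis unfolding eq p using Suc.IH False \<open>c * 2 ^ N \<ge> c\<close> by (intro conjI) linarith+
    qed
  qed
  then show ?thesis by simp
qed

lemma pt_bound:
  fixes \<phi> :: "real \<Rightarrow> real"
  assumes yf: "young_function \<phi>" and al: "\<alpha> < 0"
    and Cu: "Cu \<ge> 1" "\<forall>x>0. \<forall>T\<ge>1. \<phi> (T powr (-\<alpha>) * x) \<le> Cu * T ^ n * \<phi> x"
    and d: "0 < d" "d < r" and t: "0 \<le> t"
  shows "\<phi> (t * r powr (-\<alpha>)) / (Cu * r ^ (2*n)) \<le> \<phi> (t * d powr (-\<alpha>)) / d ^ (2*n)"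
proof (cases "t = 0")
  case True then show ?thesis using yf by (simp add: young_function_def)
next
  case False
  then have t0: "t > 0" using t by simp
  define T where "T = r / d"
  have T1: "T \<ge> 1" using d by (simp add: T_def)
  have r: "r > 0" using d by simp
  have eq: "T powr (-\<alpha>) * (t * d powr (-\<alpha>)) = t * r powr (-\<alpha>)"
    using d r by (simp add: T_def powr_divide)
  have "\<phi> (T powr (-\<alpha>) * (t * d powr (-\<alpha>))) \<le> Cu * T ^ n * \<phi> (t * d powr (-\<alpha>))"
    using Cu(2) t0 d T1 by simp
  then have "\<phi> (t * r powr (-\<alpha>)) \<le> Cu * T ^ n * \<phi> (t * d powr (-\<alpha>))"
    by (simp only: eq)
  then have "\<phi> (t * r powr (-\<alpha>)) / (Cu * r ^ (2*n)) \<le> T ^ n * \<phi> (t * d powr (-\<alpha>)) / r ^ (2*n)"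
    using Cu r by (simp add: divide_le_eq field_simps)
  also have "\<dots> = \<phi> (t * d powr (-\<alpha>)) / (d ^ n * r ^ n)"
    using d r by (simp add: T_def power_divide power_mult field_simps power2_eq_square)
  also have "\<dots> \<le> \<phi> (t * d powr (-\<alpha>)) / d ^ (2*n)"
  proof -
    have "d ^ n * d ^ n \<le> d ^ n * r ^ n" using d by (intro mult_left_mono power_mono) auto
    then have "d ^ (2*n) \<le> d ^ n * r ^ n" by (simp add: mult_2 power_add)
    then show ?thesis using d yf_nonneg[OF yf, of "t * d powr (-\<alpha>)"] t
      by (intro divide_left_mono) auto
  qed
  finally show ?thesis .
qed



lemma sum_pt:
  fixes \<phi> :: "real \<Rightarrow> real"
  assumes yf: "young_function \<phi>" and al: "\<alpha> < 0" and c: "c > 0" and d: "d \<ge> 0"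
    and d0: "d = 0 \<Longrightarrow> a = b"
  shows "(\<Sum>k. ennreal ((if \<epsilon> + c * 2 ^ Suc k < a then 1 else 0) * (if b \<le> \<epsilon> + c * 2 ^ k then 1 else 0)
            * \<phi> (c * 2 ^ k * d powr (-\<alpha>)) / d ^ m))
         \<le> 2 * ennreal (\<phi> (\<bar>a - b\<bar> / (1 * d powr \<alpha>)) / d ^ m)"
proof (cases "b < a")
  case False
  have "(if \<epsilon> + c * 2 ^ Suc k < a then 1 else 0) * (if b \<le> \<epsilon> + c * 2 ^ k then 1 else 0) = (0::real)" for k
  proof -
    have "c * 2 ^ k \<le> c * 2 ^ Suc k" using c by simp
    then show ?thesis using False by auto
  qed
  then have "(\<Sum>k. ennreal ((if \<epsilon> + c * 2 ^ Suc k < a then 1 else 0) * (if b \<le> \<epsilon> + c * 2 ^ k then 1 else 0)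
            * \<phi> (c * 2 ^ k * d powr (-\<alpha>)) / d ^ m)) = 0"
    by (simp only: mult_zero_left div_0 ennreal_0 suminf_zero)
  then show ?thesis by simp
next
  case True
  define E where "E = a - b"
  have E: "E > 0" using True by (simp add: E_def)
  have dp: "d > 0" using d d0 True by force
  define Q where "Q = \<phi> (E * d powr (-\<alpha>)) / (E * d ^ m)"
  have Q0: "Q \<ge> 0" unfolding Q_def using E dp yf_nonneg[OF yf, of "E * d powr (-\<alpha>)"] by simp
  define F where "F k = (if c * 2 ^ k \<le> E then c * 2 ^ k else 0)" for k :: nat
  have F0: "F k \<ge> 0" for k using c by (simp add: F_def)
  have trm: "ennreal ((if \<epsilon> + c * 2 ^ Suc k < a then 1 else 0) * (if b \<le> \<epsilon> + c * 2 ^ k then 1 else 0)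
            * \<phi> (c * 2 ^ k * d powr (-\<alpha>)) / d ^ m) \<le> ennreal (F k * Q)" for k
  proof (cases "\<epsilon> + c * 2 ^ Suc k < a \<and> b \<le> \<epsilon> + c * 2 ^ k")
    case True
    then have le: "c * 2 ^ k \<le> E" unfolding E_def by simp
    have "\<phi> (c * 2 ^ k * d powr (-\<alpha>)) = \<phi> ((c * 2 ^ k / E) * (E * d powr (-\<alpha>)))"
      using E by (simp add: mult.assoc)
    also have "\<dots> \<le> (c * 2 ^ k / E) * \<phi> (E * d powr (-\<alpha>))"
      by (rule yf_scale[OF yf]) (use E le c dp in auto)
    finally have "\<phi> (c * 2 ^ k * d powr (-\<alpha>)) / d ^ m \<le> (c * 2 ^ k / E) * \<phi> (E * d powr (-\<alpha>)) / d ^ m"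
      by (rule divide_right_mono) (use dp in simp)
    also have "\<dots> = F k * Q" unfolding F_def Q_def using le E dp by simp
    finally show ?thesis using True by (intro ennreal_leI) simp
  next
    case False
    then show ?thesis by auto
  qed
  have "(\<Sum>k. ennreal ((if \<epsilon> + c * 2 ^ Suc k < a then 1 else 0) * (if b \<le> \<epsilon> + c * 2 ^ k then 1 else 0)
            * \<phi> (c * 2 ^ k * d powr (-\<alpha>)) / d ^ m)) \<le> (\<Sum>k. ennreal (F k * Q))"
    by (intro suminf_le trm summableI)
  also have "\<dots> \<le> ennreal (2 * E * Q)"
  proof (rule suminf_le_const[OF summableI])
    fix N
    have "(\<Sum>k<N. ennreal (F k * Q)) = ennreal (\<Sum>k<N. F k * Q)"
      using F0 Q0 by (intro sum_ennreal) auto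
    also have "(\<Sum>k<N. F k * Q) = (\<Sum>k<N. F k) * Q" by (simp add: sum_distrib_right)
    also have "\<dots> \<le> 2 * E * Q" using geom_sum[OF c, of E N] E Q0 unfolding F_def
      by (intro mult_right_mono) auto
    finally show "(\<Sum>k<N. ennreal (F k * Q)) \<le> ennreal (2 * E * Q)" by (simp add: ennreal_leI)
  qed
  also have "2 * E * Q = 2 * (\<phi> (\<bar>a - b\<bar> / (1 * d powr \<alpha>)) / d ^ m)"
  proof -
    have "\<bar>a - b\<bar> / (1 * d powr \<alpha>) = E * d powr (-\<alpha>)"
      using True by (simp add: E_def powr_minus divide_inverse)
    then show ?thesis unfolding Q_def using E dp by simp
  qed
  also have "ennreal (2 * (\<phi> (\<bar>a - b\<bar> / (1 * d powr \<alpha>)) / d ^ m)) = 2 * ennreal (\<phi> (\<bar>a - b\<bar> / (1 * d powr \<alpha>)) / d ^ m)"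
  proof -
    have nn: "0 \<le> \<phi> (\<bar>a - b\<bar> / (1 * d powr \<alpha>)) / d ^ m"
      using dp by (intro divide_nonneg_nonneg yf_nonneg[OF yf]) auto
    show ?thesis by (subst ennreal_mult) (use nn in auto)
  qed
  finally show ?thesis .
qed

lemma seq_arg:
  fixes \<phi> :: "real \<Rightarrow> real" and m t :: "nat \<Rightarrow> real"
  assumes yf: "young_function \<phi>" and b: "\<beta> > 0" and n: "n > 0" and q: "q = real n / \<beta>"
    and th: "\<theta> > 0" and Cu: "Cu \<ge> 1" "\<forall>x>0. \<forall>T\<ge>1. \<phi> (T powr \<beta> * x) \<le> Cu * T ^ n * \<phi> x"
    and m0: "\<And>k. m k \<ge> 0" and mm: "\<And>k. m (Suc k) \<le> m k"
    and t: "\<And>k. t k = c * 2 ^ k" and c: "c > 0"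
    and Cp: "C' > 0"
    and e: "\<And>N. (\<Sum>k<N. m (Suc k) * \<phi> (t k * (((2/\<theta>) * m k) powr (1/n)) powr \<beta>) / m k) \<le> C'"
    and z: "z > 0" "\<phi> z \<ge> 2 powr q * C'"
    and A0: "A0 = 2 powr q * (\<theta>/2) * z powr q"
    and base: "t 0 powr q * m 0 \<le> A0"
  shows "(\<Sum>k<N. t k powr q * m k) \<le> A0 + 2 powr q * Cu * A0 * C' / \<phi> (((2/\<theta>) * A0) powr (1/q))"
proof -
  define a where "a k = t k powr q * m k" for k
  define ee where "ee k = m (Suc k) * \<phi> (t k * (((2/\<theta>) * m k) powr (1/n)) powr \<beta>) / m k" for k
  define W0 where "W0 = ((2/\<theta>) * A0) powr (1/q)"
  have q0: "q > 0" using q b n by simp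
  have bq: "\<beta> / real n = 1 / q" using q b n by simp
  have tpos: "t k > 0" for k using t c by simp
  have A0p: "A0 > 0" unfolding A0 using th z by (intro mult_pos_pos) auto
  have ee0: "ee k \<ge> 0" for k
  proof -
    have "0 \<le> \<phi> (t k * (((2/\<theta>) * m k) powr (1/n)) powr \<beta>)"
      by (rule yf_nonneg[OF yf]) (use tpos[of k] in simp)
    then show ?thesis unfolding ee_def using m0 by simp
  qed
  have eeC: "ee k \<le> C'" for k
  proof -
    have "ee k \<le> (\<Sum>j<Suc k. ee j)" using ee0 by (intro member_le_sum) auto
    also have "\<dots> \<le> C'" using e[of "Suc k"] unfolding ee_def .
    finally show ?thesis .
  qed
  have w: "t k * (((2/\<theta>) * m k) powr (1/n)) powr \<beta> = ((2/\<theta>) * a k) powr (1/q)" for k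
  proof -
    have "(((2/\<theta>) * m k) powr (1/n)) powr \<beta> = ((2/\<theta>) * m k) powr (1/q)"
      using bq by (simp add: powr_powr)
    moreover have "t k = (t k powr q) powr (1/q)" using tpos[of k] q0 by (simp add: powr_powr)
    moreover have "((2/\<theta>) * a k) powr (1/q) = ((2/\<theta>) * m k) powr (1/q) * (t k powr q) powr (1/q)"
      unfolding a_def powr_mult[symmetric] by (simp add: mult_ac)
    ultimately show ?thesis by (simp add: mult_ac)
  qed
  have aS: "a (Suc k) = 2 powr q * (t k powr q * m (Suc k))" for k
    unfolding a_def using t[of "Suc k"] t[of k] c by (simp add: powr_mult mult_ac)
  have a0: "a k \<ge> 0" for k unfolding a_def using m0 by simp
  have abound: "a k \<le> A0" for k
  proof (induction k)
    case 0 then show ?case using base by (simp add: a_def)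
  next
    case (Suc k)
    show ?case
    proof (cases "a k \<le> A0 / 2 powr q")
      case True
      have "a (Suc k) = 2 powr q * (t k powr q * m (Suc k))" by (rule aS)
      also have "\<dots> \<le> 2 powr q * (t k powr q * m k)" using mm[of k] tpos[of k]
        by (intro mult_left_mono) auto
      also have "\<dots> = 2 powr q * a k" by (simp add: a_def)
      finally have "a (Suc k) \<le> 2 powr q * a k" .
      also have "\<dots> \<le> A0" using True by (simp add: field_simps)
      finally show ?thesis .
    next
      case False
      then have ak: "a k > A0 / 2 powr q" by simp
      have mk: "m k > 0"
      proof (rule ccontr)
        assume "\<not> m k > 0" then have "m k = 0" using m0[of k] by simp
        then have "a k = 0" by (simp add: a_def)
        moreover have "A0 / 2 powr q > 0" using A0p by simp
        ultimately show False using ak by simp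
      qed
      have zq: "(2/\<theta>) * (A0 / 2 powr q) = z powr q" unfolding A0 using th by (simp add: field_simps)
      have "z = ((2/\<theta>) * (A0 / 2 powr q)) powr (1/q)"
        unfolding zq using z q0 by (simp add: powr_powr)
      also have "\<dots> \<le> ((2/\<theta>) * a k) powr (1/q)"
      proof -
        have "(2/\<theta>) * (A0 / 2 powr q) \<le> (2/\<theta>) * a k" using ak th by (intro mult_left_mono) auto
        then show ?thesis using th A0p q0 by (intro powr_mono2) auto
      qed
      finally have "\<phi> z \<le> \<phi> (t k * (((2/\<theta>) * m k) powr (1/n)) powr \<beta>)"
        unfolding w using z by (intro yf_mono[OF yf]) auto
      then have "m (Suc k) * (2 powr q * C') \<le> m (Suc k) * \<phi> (t k * (((2/\<theta>) * m k) powr (1/n)) powr \<beta>)"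
        using z m0 by (intro mult_left_mono) auto
      also have "\<dots> \<le> C' * m k" using eeC[of k] mk unfolding ee_def by (simp add: divide_le_eq)
      finally have "2 powr q * m (Suc k) \<le> m k" using Cp by (simp add: mult_ac)
      then have "t k powr q * (2 powr q * m (Suc k)) \<le> t k powr q * m k"
        by (intro mult_left_mono) auto
      then have "a (Suc k) \<le> a k" unfolding aS by (simp add: a_def mult_ac)
      then show ?thesis using Suc by simp
    qed
  qed
  have W0p: "W0 > 0" unfolding W0_def using th A0p by simp
  have pW0: "\<phi> W0 > 0" using yf_pos[OF yf W0p] .
  have astep: "a (Suc k) * \<phi> W0 \<le> 2 powr q * Cu * A0 * ee k" for k
  proof (cases "m k = 0")
    case True
    then have "m (Suc k) = 0" using mm[of k] m0[of "Suc k"] by simp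
    then show ?thesis unfolding aS ee_def by simp
  next
    case False
    then have mk: "m k > 0" using m0[of k] by simp
    have akp: "a k > 0" unfolding a_def using mk tpos[of k] by simp
    define T where "T = (A0 / a k) powr (1 / real n)"
    have T1: "T \<ge> 1" unfolding T_def using abound[of k] akp by (intro ge_one_powr_ge_zero) auto
    have Tn: "T ^ n = A0 / a k" unfolding T_def using A0p akp n
      by (simp add: powr_realpow'[symmetric] powr_powr)
    have wpos: "(2/\<theta>) * a k > 0" using akp th by (intro mult_pos_pos) auto
    have wk: "((2/\<theta>) * a k) powr (1/q) > 0" by (subst powr_gt_zero) (use wpos in linarith)
    have "T powr \<beta> * ((2/\<theta>) * a k) powr (1/q) = W0"
    proof -
      have "T powr \<beta> = (A0 / a k) powr (1/q)" unfolding T_def using bq by (simp add: powr_powr)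
      then have "T powr \<beta> * ((2/\<theta>) * a k) powr (1/q) = (A0 / a k) powr (1/q) * ((2/\<theta>) * a k) powr (1/q)"
        by simp
      also have "\<dots> = (A0 / a k * ((2/\<theta>) * a k)) powr (1/q)" by (rule powr_mult[symmetric])
      also have "A0 / a k * ((2/\<theta>) * a k) = (2/\<theta>) * A0" using akp by simp
      finally show ?thesis unfolding W0_def .
    qed
    moreover have "\<phi> (T powr \<beta> * ((2/\<theta>) * a k) powr (1/q)) \<le> Cu * T ^ n * \<phi> (((2/\<theta>) * a k) powr (1/q))"
      using Cu(2) wk T1 by blast
    ultimately have "\<phi> W0 \<le> Cu * (A0 / a k) * \<phi> (((2/\<theta>) * a k) powr (1/q))"
      unfolding Tn by simp
    then have aW: "a k * \<phi> W0 \<le> Cu * A0 * \<phi> (((2/\<theta>) * a k) powr (1/q))"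
      using akp by (simp add: field_simps)
    have "a (Suc k) * \<phi> W0 = 2 powr q * (m (Suc k) / m k) * (a k * \<phi> W0)"
      unfolding aS using mk by (simp add: a_def field_simps)
    also have "\<dots> \<le> 2 powr q * (m (Suc k) / m k) * (Cu * A0 * \<phi> (((2/\<theta>) * a k) powr (1/q)))"
      using aW m0[of "Suc k"] mk by (intro mult_left_mono) auto
    also have "\<dots> = 2 powr q * Cu * A0 * ee k" unfolding ee_def w[symmetric] by simp
    finally show ?thesis .
  qed
  have "(\<Sum>k<N. a k) \<le> (\<Sum>k<Suc N. a k)" using a0 by (intro sum_mono2) auto
  also have "\<dots> = a 0 + (\<Sum>k<N. a (Suc k))" by (rule sum.lessThan_Suc_shift)
  also have "(\<Sum>k<N. a (Suc k)) \<le> (\<Sum>k<N. 2 powr q * Cu * A0 * ee k / \<phi> W0)"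
    using astep pW0 by (intro sum_mono) (simp add: le_divide_eq)
  also have "\<dots> = 2 powr q * Cu * A0 / \<phi> W0 * (\<Sum>k<N. ee k)" by (simp add: sum_distrib_left)
  also have "\<dots> \<le> 2 powr q * Cu * A0 / \<phi> W0 * C'"
    using e[of N] pW0 A0p Cu unfolding ee_def by (intro mult_left_mono) auto
  finally have "(\<Sum>k<N. a k) \<le> A0 + 2 powr q * Cu * A0 * C' / \<phi> W0"
    using abound[of 0] by simp
  then show ?thesis unfolding a_def W0_def .
qed



lemma sigma_finite_lebesgue: "sigma_finite_measure (lebesgue :: 'a::euclidean_space measure)"
  unfolding sigma_finite_measure_def
proof (intro exI[of _ "range (\<lambda>n::nat. cball (0::'a) (real n))"] conjI ballI)
  show "\<Union> (range (\<lambda>n::nat. cball (0::'a) (real n))) = space lebesgue"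
    by (auto simp: dist_norm) (metis real_arch_simple)
next
  fix a assume "a \<in> range (\<lambda>n::nat. cball (0::'a) (real n))"
  then obtain n :: nat where a: "a = cball 0 (real n)" by auto
  show "emeasure lebesgue a \<noteq> \<infinity>" unfolding a
    using emeasure_bounded_finite[OF bounded_cball, of "0::'a" "real n"] by simp
qed auto

lemma id_leb_borel[measurable]: "(\<lambda>x. x) \<in> measurable (lebesgue :: 'a::euclidean_space measure) borel"
  by (simp add: measurable_completion measurable_ident_sets)

lemma meas_fst_leb: "(\<lambda>p. v (fst p)) \<in> borel_measurable (lebesgue \<Otimes>\<^sub>M (lebesgue :: 'a::euclidean_space measure))" if "(v :: 'a \<Rightarrow> real) \<in> borel_measurable lebesgue"
  by (rule measurable_compose[OF measurable_fst that])
lemma meas_snd_leb: "(\<lambda>p. v (snd p)) \<in> borel_measurable ((lebesgue :: 'a::euclidean_space measure) \<Otimes>\<^sub>M lebesgue)" if "(v :: 'a \<Rightarrow> real) \<in> borel_measurable lebesgue"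
  by (rule measurable_compose[OF measurable_snd that])
lemma meas_dist_leb[measurable]: "(\<lambda>p. dist (fst p) (snd p :: 'a::euclidean_space)) \<in> borel_measurable (lebesgue \<Otimes>\<^sub>M lebesgue)"
  apply (rule borel_measurable_dist)
  using measurable_compose[OF measurable_fst id_leb_borel] measurable_compose[OF measurable_snd id_leb_borel] by auto

lemma phi0_meas:
  assumes yf: "young_function \<phi>"
  shows "(\<lambda>s. \<phi> (max 0 s)) \<in> borel_measurable borel"
proof -
  have "continuous_on UNIV (\<lambda>s. \<phi> (max 0 s))"
  proof (rule continuous_on_compose2[of "{0..}" \<phi> UNIV "\<lambda>s. max 0 s"])
    show "continuous_on {0..} \<phi>" using yf by (simp add: young_function_def)
  qed (auto intro: continuous_intros)
  then show ?thesis by (rule borel_measurable_continuous_onI)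
qed



lemma core_eps:
  fixes \<Omega> :: "'a::euclidean_space set" and v :: "'a \<Rightarrow> real" and \<phi> :: "real \<Rightarrow> real"
  assumes yf: "young_function \<phi>" and al: "\<alpha> < 0" and th: "\<theta> > 0" and Cu: "Cu \<ge> 1"
    and upper: "\<forall>x>0. \<forall>T\<ge>1. \<phi> (T powr (-\<alpha>) * x) \<le> Cu * T ^ DIM('a) * \<phi> x"
    and Om[measurable]: "\<Omega> \<in> sets lebesgue" and vm[measurable]: "v \<in> borel_measurable lebesgue"
    and vpos: "\<forall>x\<in>\<Omega>. v x \<ge> 0"
    and fin: "\<forall>a>0. emeasure lebesgue {x\<in>\<Omega>. a < v x} < \<infinity>"
    and cmp: "\<forall>x\<in>\<Omega>. \<forall>a>0. \<forall>r>0. \<theta> * r ^ DIM('a) = 2 * measure lebesgue {x\<in>\<Omega>. a < v x} \<longrightarrow>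
               ennreal (measure lebesgue {x\<in>\<Omega>. a < v x}) \<le> emeasure lebesgue (ball x r \<inter> {y\<in>\<Omega>. v y \<le> a})"
    and modv: "besov_modular \<alpha> \<phi> \<Omega> v 1 \<le> 1"
    and q: "q = real DIM('a) / (-\<alpha>)"
    and Cp: "C' = 2 * Cu * (2/\<theta>)^2"
    and z: "z > 0" "\<phi> z \<ge> 2 powr q * C'"
    and A0: "A0 = 2 powr q * (\<theta>/2) * z powr q"
    and Kc: "Kc = A0 + 2 powr q * Cu * A0 * C' / \<phi> (((2/\<theta>) * A0) powr (1/q))"
    and eps: "\<epsilon> > 0"
  shows "(\<integral>\<^sup>+x\<in>\<Omega>. ennreal ((if 2 * \<epsilon> < v x then 1 else 0) * v x powr q) \<partial>lebesgue) \<le> ennreal (4 powr q * Kc)"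
proof -
  define n where "n = DIM('a)"
  define \<beta> where "\<beta> = - \<alpha>"
  have b: "\<beta> > 0" using al by (simp add: \<beta>_def)
  have n0: "n > 0" by (simp add: n_def)
  have q0: "q > 0" unfolding q using al by (intro divide_pos_pos) auto
  interpret L: sigma_finite_measure "lebesgue :: 'a measure" by (rule sigma_finite_lebesgue)
  note [measurable] = phi0_meas[OF yf] meas_fst_leb[OF vm] meas_snd_leb[OF vm]
  define me where "me = measure lebesgue {x\<in>\<Omega>. \<epsilon> < v x}"
  have me0: "me \<ge> 0" by (simp add: me_def)
  define c where "c = min \<epsilon> ((A0 / (me + 1)) powr (1/q))"
  have A0p: "A0 > 0" unfolding A0 using th z by (intro mult_pos_pos) auto
  have c0: "c > 0" unfolding c_def using eps A0p me0 by simp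
  have cle: "c \<le> \<epsilon>" unfolding c_def by simp
  define t where "t k = c * 2 ^ k" for k :: nat
  define s where "s k = \<epsilon> + t k" for k
  define A where "A k = {x\<in>\<Omega>. s k < v x}" for k
  define m where "m k = measure lebesgue (A k)" for k
  have tpos: "t k > 0" for k using c0 by (simp add: t_def)
  have spos: "s k > 0" for k using tpos[of k] eps by (simp add: s_def)
  have Am[measurable]: "A k \<in> sets lebesgue" for k unfolding A_def by measurable
  have Afin: "emeasure lebesgue (A k) < \<infinity>" for k using fin spos[of k] unfolding A_def by auto
  have Aem: "emeasure lebesgue (A k) = ennreal (m k)" for k
    unfolding m_def using Afin[of k] by (simp add: emeasure_eq_ennreal_measure less_top)
  have m0: "m k \<ge> 0" for k by (simp add: m_def)
  have Amono: "A (Suc k) \<subseteq> A k" for k using tpos[of k] unfolding A_def s_def t_def by auto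
  have mm: "m (Suc k) \<le> m k" for k
    unfolding m_def using Amono[of k] Afin[of k] by (intro measure_mono_fmeasurable) (auto simp: fmeasurable_def)
  have m0me: "m 0 \<le> me"
  proof -
    have "A 0 \<subseteq> {x\<in>\<Omega>. \<epsilon> < v x}" unfolding A_def s_def using tpos[of 0] by auto
    moreover have "emeasure lebesgue {x\<in>\<Omega>. \<epsilon> < v x} < \<infinity>" using fin eps by auto
    ultimately show ?thesis unfolding m_def me_def
      by (intro measure_mono_fmeasurable) (auto simp: fmeasurable_def)
  qed
  define r where "r k = ((2/\<theta>) * m k) powr (1 / real n)" for k
  define h where "h k x y = ennreal ((if \<epsilon> + c * 2 ^ Suc k < v x then 1 else 0) * (if v y \<le> \<epsilon> + c * 2 ^ k then 1 else 0)
            * \<phi> (c * 2 ^ k * dist x y powr (-\<alpha>)) / dist x y ^ (2 * DIM('a)))" for k x y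
  define g where "g x y = ennreal (\<phi> (\<bar>v x - v y\<bar> / (1 * dist x y powr \<alpha>)) / dist x y ^ (2 * DIM('a)))" for x y
  define I where "I k = (\<integral>\<^sup>+x\<in>\<Omega>. (\<integral>\<^sup>+y\<in>\<Omega>. h k x y \<partial>lebesgue) \<partial>lebesgue)" for k
  have hm: "(\<lambda>(x,y). h k x y * indicator \<Omega> y) \<in> borel_measurable (lebesgue \<Otimes>\<^sub>M lebesgue)" for k
  proof -
    have "(\<lambda>(x,y). h k x y * indicator \<Omega> y) = (\<lambda>(x,y). ennreal ((if \<epsilon> + c * 2 ^ Suc k < v x then 1 else 0) * (if v y \<le> \<epsilon> + c * 2 ^ k then 1 else 0)
            * \<phi> (max 0 (c * 2 ^ k * dist x y powr (-\<alpha>))) / dist x y ^ (2 * DIM('a))) * indicator \<Omega> y)"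
      using c0 by (auto simp: h_def fun_eq_iff max_def)
    also have "\<dots> \<in> borel_measurable (lebesgue \<Otimes>\<^sub>M lebesgue)"
    proof -
      have [measurable]: "(\<lambda>p. snd p) \<in> measurable (lebesgue \<Otimes>\<^sub>M lebesgue) (lebesgue :: 'a measure)" by simp
      show ?thesis unfolding case_prod_beta by measurable
    qed
    finally show ?thesis .
  qed
  have gm: "(\<lambda>(x,y). g x y * indicator \<Omega> y) \<in> borel_measurable (lebesgue \<Otimes>\<^sub>M lebesgue)"
  proof -
    have "(\<lambda>(x,y). g x y * indicator \<Omega> y) = (\<lambda>(x,y). ennreal (\<phi> (max 0 (\<bar>v x - v y\<bar> / (1 * dist x y powr \<alpha>))) / dist x y ^ (2 * DIM('a))) * indicator \<Omega> y)"
      by (auto simp: g_def fun_eq_iff max_def)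
    also have "\<dots> \<in> borel_measurable (lebesgue \<Otimes>\<^sub>M lebesgue)"
    proof -
      have [measurable]: "(\<lambda>p. snd p) \<in> measurable (lebesgue \<Otimes>\<^sub>M lebesgue) (lebesgue :: 'a measure)" by simp
      show ?thesis unfolding case_prod_beta by measurable
    qed
    finally show ?thesis .
  qed
  have hmy: "(\<lambda>y. h k x y * indicator \<Omega> y) \<in> borel_measurable lebesgue" for k x
    using measurable_Pair2[OF hm[of k], of x] by simp
  have gmy: "(\<lambda>y. g x y * indicator \<Omega> y) \<in> borel_measurable lebesgue" for x
    using measurable_Pair2[OF gm, of x] by simp
  have hmx: "(\<lambda>x. (\<integral>\<^sup>+y. h k x y * indicator \<Omega> y \<partial>lebesgue) * indicator \<Omega> x) \<in> borel_measurable lebesgue" for k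
    using L.borel_measurable_nn_integral[of "\<lambda>x y. h k x y * indicator \<Omega> y" lebesgue] hm[of k] by measurable
  have gmx: "(\<lambda>x. (\<integral>\<^sup>+y. g x y * indicator \<Omega> y \<partial>lebesgue)) \<in> borel_measurable lebesgue"
    using L.borel_measurable_nn_integral[of "\<lambda>x y. g x y * indicator \<Omega> y" lebesgue] gm by simp
  have E2: "(\<Sum>k. I k) \<le> 2"
  proof -
    have "(\<Sum>k. I k) = (\<integral>\<^sup>+x. (\<Sum>k. (\<integral>\<^sup>+y. h k x y * indicator \<Omega> y \<partial>lebesgue) * indicator \<Omega> x) \<partial>lebesgue)"
      unfolding I_def by (rule nn_integral_suminf[symmetric]) (rule hmx)
    also have "\<dots> = (\<integral>\<^sup>+x. (\<integral>\<^sup>+y. (\<Sum>k. h k x y) * indicator \<Omega> y \<partial>lebesgue) * indicator \<Omega> x \<partial>lebesgue)"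
    proof (rule nn_integral_cong)
      fix x
      have "(\<Sum>k. (\<integral>\<^sup>+y. h k x y * indicator \<Omega> y \<partial>lebesgue) * indicator \<Omega> x)
          = (\<Sum>k. (\<integral>\<^sup>+y. h k x y * indicator \<Omega> y \<partial>lebesgue)) * indicator \<Omega> x" by simp
      also have "(\<Sum>k. (\<integral>\<^sup>+y. h k x y * indicator \<Omega> y \<partial>lebesgue)) = (\<integral>\<^sup>+y. (\<Sum>k. h k x y * indicator \<Omega> y) \<partial>lebesgue)"
        by (rule nn_integral_suminf[symmetric]) (rule hmy)
      finally show "(\<Sum>k. (\<integral>\<^sup>+y. h k x y * indicator \<Omega> y \<partial>lebesgue) * indicator \<Omega> x)
          = (\<integral>\<^sup>+y. (\<Sum>k. h k x y) * indicator \<Omega> y \<partial>lebesgue) * indicator \<Omega> x" by simp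
    qed
    also have "\<dots> \<le> (\<integral>\<^sup>+x. (\<integral>\<^sup>+y. 2 * (g x y * indicator \<Omega> y) \<partial>lebesgue) * indicator \<Omega> x \<partial>lebesgue)"
    proof (intro nn_integral_mono mult_right_mono)
      fix x y
      have "(\<Sum>k. h k x y) \<le> 2 * g x y"
        unfolding h_def g_def by (rule sum_pt[OF yf al c0]) auto
      then show "(\<Sum>k. h k x y) * indicator \<Omega> y \<le> 2 * (g x y * indicator \<Omega> y)"
        by (simp add: mult.assoc[symmetric] mult_right_mono)
    qed auto
    also have "\<dots> = (\<integral>\<^sup>+x. 2 * ((\<integral>\<^sup>+y. g x y * indicator \<Omega> y \<partial>lebesgue) * indicator \<Omega> x) \<partial>lebesgue)"
      by (rule nn_integral_cong) (simp add: nn_integral_cmult[OF gmy] mult.assoc)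
    also have "\<dots> = 2 * (\<integral>\<^sup>+x. (\<integral>\<^sup>+y. g x y * indicator \<Omega> y \<partial>lebesgue) * indicator \<Omega> x \<partial>lebesgue)"
      by (rule nn_integral_cmult) (use gmx in measurable)
    also have "(\<integral>\<^sup>+x. (\<integral>\<^sup>+y. g x y * indicator \<Omega> y \<partial>lebesgue) * indicator \<Omega> x \<partial>lebesgue) = besov_modular \<alpha> \<phi> \<Omega> v 1"
      unfolding besov_modular_def g_def by simp
    also have "2 * besov_modular \<alpha> \<phi> \<Omega> v 1 \<le> 2 * 1" using modv by (intro mult_left_mono) auto
    finally show ?thesis by simp
  qed

  have Cup: "Cu > 0" using Cu by simp
  have upper': "\<forall>x>0. \<forall>T\<ge>1. \<phi> (T powr (-\<alpha>) * x) \<le> Cu * T ^ n * \<phi> x" using upper by (simp add: n_def)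
  have E1: "ennreal (m (Suc k) * \<phi> (t k * r k powr \<beta>) / m k) \<le> ennreal (Cu * (2/\<theta>)^2) * I k" for k
  proof (cases "m (Suc k) = 0")
    case True then show ?thesis by simp
  next
    case False
    then have ms: "m (Suc k) > 0" using m0[of "Suc k"] by simp
    have mk: "m k > 0" using ms mm[of k] by simp
    define R where "R = r k"
    have Rp: "R > 0" unfolding R_def r_def using mk th by simp
    have Rn: "R ^ n = (2/\<theta>) * m k" unfolding R_def r_def using mk th n0
      by (simp add: powr_realpow'[symmetric] powr_powr)
    have thR: "\<theta> * R ^ DIM('a) = 2 * measure lebesgue {x\<in>\<Omega>. s k < v x}"
      using Rn th unfolding n_def m_def A_def by simp
    define B0 where "B0 = \<phi> (t k * R powr \<beta>) / (Cu * R ^ (2*n))"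
    have B0nn: "B0 \<ge> 0" unfolding B0_def using Cup Rp tpos[of k]
      by (intro divide_nonneg_nonneg yf_nonneg[OF yf]) auto
    have inner: "ennreal (B0 * m k) \<le> (\<integral>\<^sup>+y\<in>\<Omega>. h k x y \<partial>lebesgue)" if x: "x \<in> A (Suc k)" for x
    proof -
      define S where "S = ball x R \<inter> {y\<in>\<Omega>. v y \<le> s k}"
      have S1: "{y\<in>\<Omega>. v y \<le> s k} \<in> sets lebesgue" by measurable
      have S2: "ball x R \<in> sets lebesgue" using lmeasurable_ball by (rule fmeasurableD)
      have Sm: "S \<in> sets lebesgue" unfolding S_def by (intro sets.Int S2 S1)
      have xO: "x \<in> \<Omega>" and vx: "s (Suc k) < v x" using x by (auto simp: A_def)
      have mS: "ennreal (m k) \<le> emeasure lebesgue S"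
        using cmp xO spos[of k] Rp thR unfolding S_def m_def A_def by blast
      have pw: "ennreal B0 * indicator S y \<le> h k x y * indicator \<Omega> y" for y
      proof (cases "y \<in> S")
        case True
        then have yO: "y \<in> \<Omega>" and vy: "v y \<le> s k" and dy: "dist x y < R" by (auto simp: S_def)
        have "s k < s (Suc k)" using tpos[of k] by (simp add: s_def t_def)
        then have "x \<noteq> y" using vx vy by auto
        then have dp: "dist x y > 0" by simp
        have "B0 \<le> \<phi> (t k * dist x y powr (-\<alpha>)) / dist x y ^ (2*n)"
          unfolding B0_def \<beta>_def using pt_bound[OF yf al Cu upper' dp dy, of "t k"] tpos[of k] by simp
        moreover have "h k x y = ennreal (\<phi> (t k * dist x y powr (-\<alpha>)) / dist x y ^ (2*n))"
          unfolding h_def using vx vy by (simp add: s_def t_def n_def)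
        ultimately show ?thesis using True yO by (simp add: ennreal_leI)
      qed simp
      have "ennreal (B0 * m k) = ennreal B0 * ennreal (m k)" using B0nn m0[of k] by (simp add: ennreal_mult)
      also have "\<dots> \<le> ennreal B0 * emeasure lebesgue S" using mS by (intro mult_left_mono) auto
      also have "\<dots> = (\<integral>\<^sup>+y. ennreal B0 * indicator S y \<partial>lebesgue)" by (simp add: nn_integral_cmult_indicator Sm)
      also have "\<dots> \<le> (\<integral>\<^sup>+y\<in>\<Omega>. h k x y \<partial>lebesgue)" by (intro nn_integral_mono pw)
      finally show ?thesis .
    qed
    have "ennreal (B0 * m k * m (Suc k)) = ennreal (B0 * m k) * ennreal (m (Suc k))"
      using B0nn m0 by (simp add: ennreal_mult)
    also have "\<dots> = (\<integral>\<^sup>+x. ennreal (B0 * m k) * indicator (A (Suc k)) x \<partial>lebesgue)"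
      by (simp add: nn_integral_cmult_indicator Aem)
    also have "\<dots> \<le> I k" unfolding I_def
    proof (intro nn_integral_mono)
      fix x show "ennreal (B0 * m k) * indicator (A (Suc k)) x \<le> (\<integral>\<^sup>+y\<in>\<Omega>. h k x y \<partial>lebesgue) * indicator \<Omega> x"
        using inner[of x] by (cases "x \<in> A (Suc k)") (auto simp: A_def)
    qed
    finally have le: "ennreal (B0 * m k * m (Suc k)) \<le> I k" .
    have R2: "R ^ (2*n) = ((2/\<theta>) * m k)^2" using Rn by (metis power_mult mult.commute)
    have eq: "m (Suc k) * \<phi> (t k * r k powr \<beta>) / m k = Cu * (2/\<theta>)^2 * (B0 * m k * m (Suc k))"
      unfolding B0_def R_def[symmetric] R2 using mk th Cup by (simp add: field_simps power2_eq_square)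
    have "ennreal (m (Suc k) * \<phi> (t k * r k powr \<beta>) / m k) = ennreal (Cu * (2/\<theta>)^2) * ennreal (B0 * m k * m (Suc k))"
      unfolding eq using Cup B0nn m0 by (simp add: ennreal_mult)
    also have "\<dots> \<le> ennreal (Cu * (2/\<theta>)^2) * I k" using le by (intro mult_left_mono) auto
    finally show ?thesis .
  qed
  define e where "e k = m (Suc k) * \<phi> (t k * r k powr \<beta>) / m k" for k
  have e0: "e k \<ge> 0" for k
  proof -
    have "0 \<le> \<phi> (t k * r k powr \<beta>)" by (rule yf_nonneg[OF yf]) (use tpos[of k] in simp)
    then show ?thesis unfolding e_def using m0 by simp
  qed
  have esum: "(\<Sum>k<N. e k) \<le> C'" for N
  proof -
    have "ennreal (\<Sum>k<N. e k) = (\<Sum>k<N. ennreal (e k))" using e0 by simp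
    also have "\<dots> \<le> (\<Sum>k<N. ennreal (Cu * (2/\<theta>)^2) * I k)" using E1 unfolding e_def by (intro sum_mono) auto
    also have "\<dots> = ennreal (Cu * (2/\<theta>)^2) * (\<Sum>k<N. I k)" by (simp add: sum_distrib_left)
    also have "\<dots> \<le> ennreal (Cu * (2/\<theta>)^2) * (\<Sum>k. I k)"
      by (intro mult_left_mono sum_le_suminf summableI) auto
    also have "\<dots> \<le> ennreal (Cu * (2/\<theta>)^2) * 2" using E2 by (intro mult_left_mono) auto
    also have "\<dots> = ennreal C'" unfolding Cp using Cup by (simp add: ennreal_mult mult_ac)
    finally show ?thesis using Cup th unfolding Cp by (simp add: ennreal_le_iff)
  qed
  have Cpp: "C' > 0" unfolding Cp using Cup th by simp
  have base: "t 0 powr q * m 0 \<le> A0"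
  proof -
    have "t 0 powr q \<le> ((A0 / (me + 1)) powr (1/q)) powr q"
      unfolding t_def using c0 q0 by (intro powr_mono2) (auto simp: c_def)
    also have "\<dots> = A0 / (me + 1)" using q0 A0p me0 by (simp add: powr_powr)
    finally have "t 0 powr q * m 0 \<le> A0 / (me + 1) * me"
      using m0me m0[of 0] A0p me0 by (intro mult_mono) auto
    also have "\<dots> \<le> A0" using A0p me0 by (simp add: field_simps)
    finally show ?thesis .
  qed
  have partial: "(\<Sum>k<N. t k powr q * m k) \<le> Kc" for N
    unfolding Kc
    by (rule seq_arg[OF yf b n0 _ th Cu _ m0 mm t_def c0 Cpp _ z A0 base])
       (use q upper' esum in \<open>auto simp: n_def \<beta>_def e_def r_def\<close>)
  have Kc0: "Kc \<ge> 0" using partial[of 0] by simp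
  \<comment> \<open>layer cake\<close>
  have lc: "(\<integral>\<^sup>+x\<in>\<Omega>. ennreal ((if s 0 < v x then 1 else 0) * (v x - \<epsilon>) powr q) \<partial>lebesgue) \<le> ennreal (2 powr q) * ennreal Kc"
  proof -
    have pw: "ennreal ((if s 0 < v x then 1 else 0) * (v x - \<epsilon>) powr q) * indicator \<Omega> x
        \<le> ennreal (2 powr q) * (\<Sum>k. ennreal (t k powr q) * indicator (A k) x)" for x
    proof (cases "x \<in> \<Omega> \<and> s 0 < v x")
      case True
      then have xO: "x \<in> \<Omega>" and vx: "s 0 < v x" by auto
      have "\<exists>k. v x - \<epsilon> \<le> t k"
      proof -
        obtain k where "(v x - \<epsilon>) / c < 2 ^ k" using real_arch_pow[of 2] by auto
        then show ?thesis using c0 by (auto simp: t_def field_simps intro!: exI[of _ k])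
      qed
      then obtain K' where K'1: "v x - \<epsilon> \<le> t K'" and K'2: "\<forall>j<K'. \<not> v x - \<epsilon> \<le> t j"
        using exists_least_iff[of "\<lambda>k. v x - \<epsilon> \<le> t k"] by blast
      have "K' \<noteq> 0"
      proof
        assume "K' = 0" then show False using K'1 vx by (simp add: s_def)
      qed
      then obtain K where K: "K' = Suc K" by (cases K') auto
      have xA: "x \<in> A K" using K'2 K xO by (auto simp: A_def s_def)
      have "(v x - \<epsilon>) powr q \<le> t (Suc K) powr q"
        using K'1 K vx tpos[of 0] q0 by (intro powr_mono2) (auto simp: s_def)
      also have "t (Suc K) powr q = 2 powr q * t K powr q" by (simp add: t_def powr_mult mult_ac)
      finally have le1: "(v x - \<epsilon>) powr q \<le> 2 powr q * t K powr q" .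
      have "ennreal ((if s 0 < v x then 1 else 0) * (v x - \<epsilon>) powr q) * indicator \<Omega> x = ennreal ((v x - \<epsilon>) powr q)"
        using xO vx by simp
      also have "\<dots> \<le> ennreal (2 powr q) * ennreal (t K powr q)"
        using le1 by (simp add: ennreal_mult[symmetric] ennreal_leI)
      also have "ennreal (t K powr q) = (\<Sum>k\<in>{K}. ennreal (t k powr q) * indicator (A k) x)" using xA by simp
      also have "\<dots> \<le> (\<Sum>k. ennreal (t k powr q) * indicator (A k) x)"
        by (intro sum_le_suminf summableI) auto
      finally show ?thesis by (simp add: mult_left_mono)
    next
      case False then show ?thesis by auto
    qed
    have "(\<integral>\<^sup>+x\<in>\<Omega>. ennreal ((if s 0 < v x then 1 else 0) * (v x - \<epsilon>) powr q) \<partial>lebesgue)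
        \<le> (\<integral>\<^sup>+x. ennreal (2 powr q) * (\<Sum>k. ennreal (t k powr q) * indicator (A k) x) \<partial>lebesgue)"
      by (intro nn_integral_mono pw)
    also have "\<dots> = ennreal (2 powr q) * (\<integral>\<^sup>+x. (\<Sum>k. ennreal (t k powr q) * indicator (A k) x) \<partial>lebesgue)"
      by (rule nn_integral_cmult) measurable
    also have "(\<integral>\<^sup>+x. (\<Sum>k. ennreal (t k powr q) * indicator (A k) x) \<partial>lebesgue) = (\<Sum>k. (\<integral>\<^sup>+x. ennreal (t k powr q) * indicator (A k) x \<partial>lebesgue))"
      by (rule nn_integral_suminf) measurable
    also have "\<dots> = (\<Sum>k. ennreal (t k powr q * m k))"
      by (simp add: nn_integral_cmult_indicator Aem ennreal_mult m0)
    also have "\<dots> \<le> ennreal Kc"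
    proof (rule suminf_le_const[OF summableI])
      fix N
      have "(\<Sum>k<N. ennreal (t k powr q * m k)) = ennreal (\<Sum>k<N. t k powr q * m k)"
        using m0 by (intro sum_ennreal) auto
      then show "(\<Sum>k<N. ennreal (t k powr q * m k)) \<le> ennreal Kc" using partial[of N] by (simp add: ennreal_leI)
    qed
    finally show ?thesis by (simp add: mult_left_mono)
  qed
  have pw2: "ennreal ((if 2 * \<epsilon> < v x then 1 else 0) * v x powr q) * indicator \<Omega> x
      \<le> ennreal (2 powr q) * (ennreal ((if s 0 < v x then 1 else 0) * (v x - \<epsilon>) powr q) * indicator \<Omega> x)" for x
  proof (cases "x \<in> \<Omega> \<and> 2 * \<epsilon> < v x")
    case True
    then have vx: "2 * \<epsilon> < v x" and xO: "x \<in> \<Omega>" by auto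
    have s0: "s 0 < v x" using vx cle by (simp add: s_def t_def)
    have "v x powr q \<le> (2 * (v x - \<epsilon>)) powr q" using vx eps q0 by (intro powr_mono2) auto
    also have "\<dots> = 2 powr q * (v x - \<epsilon>) powr q" by (rule powr_mult)
    finally show ?thesis using xO vx s0 by (simp add: ennreal_mult[symmetric] ennreal_leI)
  next
    case False then show ?thesis by auto
  qed
  have "(\<integral>\<^sup>+x\<in>\<Omega>. ennreal ((if 2 * \<epsilon> < v x then 1 else 0) * v x powr q) \<partial>lebesgue)
      \<le> (\<integral>\<^sup>+x. ennreal (2 powr q) * (ennreal ((if s 0 < v x then 1 else 0) * (v x - \<epsilon>) powr q) * indicator \<Omega> x) \<partial>lebesgue)"
    by (intro nn_integral_mono pw2)
  also have "\<dots> = ennreal (2 powr q) * (\<integral>\<^sup>+x\<in>\<Omega>. ennreal ((if s 0 < v x then 1 else 0) * (v x - \<epsilon>) powr q) \<partial>lebesgue)"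
    by (rule nn_integral_cmult) measurable
  also have "\<dots> \<le> ennreal (2 powr q) * (ennreal (2 powr q) * ennreal Kc)" using lc by (intro mult_left_mono) auto
  also have "\<dots> = ennreal (4 powr q * Kc)"
  proof -
    have "(4::real) powr q = 2 powr q * 2 powr q" using powr_mult[of 2 2 q] by simp
    then show ?thesis using Kc0 by (simp add: ennreal_mult mult.assoc)
  qed
  finally show ?thesis .
qed



lemma core_full:
  fixes \<Omega> :: "'a::euclidean_space set" and v :: "'a \<Rightarrow> real" and \<phi> :: "real \<Rightarrow> real"
  assumes yf: "young_function \<phi>" and al: "\<alpha> < 0" and th: "\<theta> > 0" and Cu: "Cu \<ge> 1"
    and upper: "\<forall>x>0. \<forall>T\<ge>1. \<phi> (T powr (-\<alpha>) * x) \<le> Cu * T ^ DIM('a) * \<phi> x"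
    and Om[measurable]: "\<Omega> \<in> sets lebesgue" and vm[measurable]: "v \<in> borel_measurable lebesgue"
    and vpos: "\<forall>x\<in>\<Omega>. v x \<ge> 0"
    and fin: "\<forall>a>0. emeasure lebesgue {x\<in>\<Omega>. a < v x} < \<infinity>"
    and cmp: "\<forall>x\<in>\<Omega>. \<forall>a>0. \<forall>r>0. \<theta> * r ^ DIM('a) = 2 * measure lebesgue {x\<in>\<Omega>. a < v x} \<longrightarrow>
               ennreal (measure lebesgue {x\<in>\<Omega>. a < v x}) \<le> emeasure lebesgue (ball x r \<inter> {y\<in>\<Omega>. v y \<le> a})"
    and modv: "besov_modular \<alpha> \<phi> \<Omega> v 1 \<le> 1"
    and q: "q = real DIM('a) / (-\<alpha>)"
    and Cp: "C' = 2 * Cu * (2/\<theta>)^2"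
    and z: "z > 0" "\<phi> z \<ge> 2 powr q * C'"
    and A0: "A0 = 2 powr q * (\<theta>/2) * z powr q"
    and Kc: "Kc = A0 + 2 powr q * Cu * A0 * C' / \<phi> (((2/\<theta>) * A0) powr (1/q))"
  shows "(\<integral>\<^sup>+x\<in>\<Omega>. ennreal (v x powr q) \<partial>lebesgue) \<le> ennreal (4 powr q * Kc)"
proof -
  define f where "f j x = ennreal ((if 1 / real (Suc j) < v x then 1 else 0) * v x powr q) * indicator \<Omega> x" for j x
  have bnd: "(\<integral>\<^sup>+x. f j x \<partial>lebesgue) \<le> ennreal (4 powr q * Kc)" for j
  proof -
    have e: "(1 / (2 * real (Suc j))) > 0" by simp
    have "2 * (1 / (2 * real (Suc j))) = 1 / real (Suc j)" by (simp add: field_simps)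
    then show ?thesis
      using core_eps[OF yf al th Cu upper Om vm vpos fin cmp modv q Cp z A0 Kc e] unfolding f_def by simp
  qed
  have inc: "incseq f"
  proof (rule incseq_SucI, rule le_funI)
    fix j x
    have "1 / real (Suc (Suc j)) \<le> 1 / real (Suc j)" by (simp add: frac_le)
    then show "f j x \<le> f (Suc j) x" unfolding f_def
      by (cases "x \<in> \<Omega>") (auto intro!: ennreal_leI)
  qed
  have fm: "f j \<in> borel_measurable lebesgue" for j unfolding f_def by measurable
  have pt: "ennreal (v x powr q) * indicator \<Omega> x = (SUP j. f j x)" for x
  proof (cases "x \<in> \<Omega> \<and> v x > 0")
    case True
    then obtain j0 where j0: "inverse (real (Suc j0)) < v x" using reals_Archimedean by blast
    have up: "f j x \<le> ennreal (v x powr q) * indicator \<Omega> x" for j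
      unfolding f_def using True by (auto intro!: ennreal_leI)
    have "f j0 x = ennreal (v x powr q) * indicator \<Omega> x" unfolding f_def using True j0
      by (simp add: inverse_eq_divide)
    then show ?thesis using up by (intro antisym SUP_upper2[of j0] SUP_least) auto
  next
    case False
    have "f j x = 0" for j
    proof (cases "x \<in> \<Omega>")
      case True then have "v x \<le> 0" using False by auto
      moreover have "0 < 1 / real (Suc j)" by simp
      ultimately have "\<not> (1 / real (Suc j) < v x)" by linarith
      then show ?thesis unfolding f_def by simp
    qed (simp add: f_def)
    moreover have "ennreal (v x powr q) * indicator \<Omega> x = 0"
    proof (cases "x \<in> \<Omega>")
      case True then have "v x = 0" using False vpos by force
      then show ?thesis by simp
    qed simp
    ultimately show ?thesis by simp
  qed
  have "(\<integral>\<^sup>+x\<in>\<Omega>. ennreal (v x powr q) \<partial>lebesgue) = (\<integral>\<^sup>+x. (SUP j. f j x) \<partial>lebesgue)"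
    using pt by simp
  also have "\<dots> = (SUP j. (\<integral>\<^sup>+x. f j x \<partial>lebesgue))"
    by (rule nn_integral_monotone_convergence_SUP[OF inc fm])
  also have "\<dots> \<le> ennreal (4 powr q * Kc)" using bnd by (intro SUP_least) auto
  finally show ?thesis .
qed

lemma cmp_lemma:
  fixes \<Omega> :: "'a::euclidean_space set" and v :: "'a \<Rightarrow> real"
  assumes reg: "globally_regular \<theta> \<Omega>"
    and Om[measurable]: "\<Omega> \<in> sets lebesgue" and vm[measurable]: "v \<in> borel_measurable lebesgue"
    and vpos: "\<forall>x\<in>\<Omega>. v x \<ge> 0"
    and fin: "\<forall>a>0. emeasure lebesgue {x\<in>\<Omega>. a < v x} < \<infinity>"
    and half: "emeasure lebesgue \<Omega> < \<infinity> \<longrightarrow> emeasure lebesgue {x\<in>\<Omega>. v x = 0} \<ge> emeasure lebesgue \<Omega> / 2"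
  shows "\<forall>x\<in>\<Omega>. \<forall>a>0. \<forall>r>0. \<theta> * r ^ DIM('a) = 2 * measure lebesgue {x\<in>\<Omega>. a < v x} \<longrightarrow>
               ennreal (measure lebesgue {x\<in>\<Omega>. a < v x}) \<le> emeasure lebesgue (ball x r \<inter> {y\<in>\<Omega>. v y \<le> a})"
proof (intro ballI allI impI)
  fix x a r
  assume x: "x \<in> \<Omega>" and a: "a > (0::real)" and r: "r > (0::real)"
    and eq: "\<theta> * r ^ DIM('a) = 2 * measure lebesgue {x\<in>\<Omega>. a < v x}"
  define P where "P = {x\<in>\<Omega>. a < v x}"
  define Z where "Z = {y\<in>\<Omega>. v y \<le> a}"
  define M where "M = measure lebesgue P"
  have Pm[measurable]: "P \<in> sets lebesgue" unfolding P_def by measurable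
  have Zm[measurable]: "Z \<in> sets lebesgue" unfolding Z_def by measurable
  have Bm[measurable]: "ball x r \<in> sets lebesgue" using lmeasurable_ball by (rule fmeasurableD)
  have PM: "emeasure lebesgue P = ennreal M" unfolding M_def P_def using fin a
    by (simp add: emeasure_eq_ennreal_measure less_top)
  have M0: "M \<ge> 0" by (simp add: M_def)
  show "ennreal (measure lebesgue {x\<in>\<Omega>. a < v x}) \<le> emeasure lebesgue (ball x r \<inter> {y\<in>\<Omega>. v y \<le> a})"
    unfolding P_def[symmetric] Z_def[symmetric] M_def[symmetric]
  proof (cases "\<not> bounded \<Omega> \<or> r < 2 * diameter \<Omega>")
    case True
    have e2: "\<theta> * r ^ DIM('a) = 2 * M" using eq by (simp add: M_def P_def)
    have "ennreal (\<theta> * r ^ DIM('a)) \<le> emeasure lebesgue (ball x r \<inter> \<Omega>)"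
      using reg x r True unfolding globally_regular_def by blast
    then have "ennreal (2 * M) \<le> emeasure lebesgue (ball x r \<inter> \<Omega>)" by (simp only: e2)
    also have "\<dots> \<le> emeasure lebesgue ((ball x r \<inter> Z) \<union> P)"
      by (rule emeasure_mono) (auto simp: Z_def P_def)
    also have "\<dots> \<le> emeasure lebesgue (ball x r \<inter> Z) + emeasure lebesgue P"
      by (rule emeasure_subadditive) auto
    finally have le: "ennreal (2 * M) \<le> emeasure lebesgue (ball x r \<inter> Z) + ennreal M" using PM by simp
    show "ennreal M \<le> emeasure lebesgue (ball x r \<inter> Z)"
    proof (cases "emeasure lebesgue (ball x r \<inter> Z) = \<infinity>")
      case True then show ?thesis by simp
    next
      case False
      then obtain b where b: "emeasure lebesgue (ball x r \<inter> Z) = ennreal b" "b \<ge> 0"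
        by (metis ennreal_cases infinity_ennreal_def)
      have "ennreal (2 * M) \<le> ennreal (b + M)" using le unfolding b(1) ennreal_plus[OF b(2) M0, symmetric] .
      then have "2 * M \<le> b + M" using ennreal_le_iff[of "b + M" "2 * M"] b M0 by simp
      then show ?thesis using b M0 by (simp add: ennreal_leI)
    qed
  next
    case False
    then have bd: "bounded \<Omega>" and r2: "2 * diameter \<Omega> \<le> r" by auto
    have sub: "\<Omega> \<subseteq> ball x r"
    proof
      fix y assume y: "y \<in> \<Omega>"
      have "dist x y \<le> diameter \<Omega>" by (rule diameter_bounded_bound[OF bd x y])
      moreover have "diameter \<Omega> \<ge> 0" by (rule diameter_ge_0[OF bd])
      ultimately show "y \<in> ball x r" using r2 r by simp
    qed
    have Ofin: "emeasure lebesgue \<Omega> < \<infinity>"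
    proof -
      have "\<Omega> \<subseteq> ball x r" by (rule sub)
      then have "emeasure lebesgue \<Omega> \<le> emeasure lebesgue (ball x r)" by (rule emeasure_mono) simp
      also have "\<dots> < \<infinity>" using lmeasurable_ball by (simp add: fmeasurable_def)
      finally show ?thesis .
    qed
    define Z0 where "Z0 = {y\<in>\<Omega>. v y = 0}"
    have Z0m[measurable]: "Z0 \<in> sets lebesgue" unfolding Z0_def by measurable
    have hz: "emeasure lebesgue \<Omega> / 2 \<le> emeasure lebesgue Z0" using half Ofin unfolding Z0_def by simp
    define w where "w = measure lebesgue \<Omega>"
    define z0 where "z0 = measure lebesgue Z0"
    have Ow: "emeasure lebesgue \<Omega> = ennreal w" unfolding w_def using Ofin
      by (simp add: emeasure_eq_ennreal_measure less_top)
    have Z0le: "emeasure lebesgue Z0 \<le> emeasure lebesgue \<Omega>" by (rule emeasure_mono) (auto simp: Z0_def)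
    have "emeasure lebesgue Z0 < \<infinity>" by (rule le_less_trans[OF Z0le Ofin])
    then have Zz: "emeasure lebesgue Z0 = ennreal z0" unfolding z0_def
      by (metis emeasure_eq_ennreal_measure infinity_ennreal_def less_imp_neq)
    have "emeasure lebesgue P + emeasure lebesgue Z0 = emeasure lebesgue (P \<union> Z0)"
      by (rule plus_emeasure) (use a in \<open>auto simp: P_def Z0_def\<close>)
    also have "\<dots> \<le> emeasure lebesgue \<Omega>" by (rule emeasure_mono) (auto simp: P_def Z0_def)
    finally have "ennreal (M + z0) \<le> ennreal w" using PM Zz Ow M0 by (simp add: ennreal_plus z0_def)
    then have 1: "M + z0 \<le> w" by (simp add: ennreal_le_iff w_def)
    have "ennreal (w / 2) \<le> ennreal z0" using hz Ow Zz by (simp add: ennreal_divide_numeral w_def)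
    then have 2: "w / 2 \<le> z0" by (simp add: ennreal_le_iff z0_def)
    have "ennreal M \<le> ennreal z0" using 1 2 by (intro ennreal_leI) simp
    also have "\<dots> = emeasure lebesgue Z0" using Zz by simp
    also have "\<dots> \<le> emeasure lebesgue (ball x r \<inter> Z)"
      by (rule emeasure_mono) (use sub a in \<open>auto simp: Z0_def Z_def\<close>)
    finally show "ennreal M \<le> emeasure lebesgue (ball x r \<inter> Z)" .
  qed
qed



theorem lemma3p1:
  fixes \<alpha> \<theta> :: real and \<phi> :: "real \<Rightarrow> real"
  assumes "DIM('a::euclidean_space) \<ge> 2"
    and "- real DIM('a) < \<alpha>" and "\<alpha> < 0"
    and "young_function \<phi>"
    and "Lambda_lower DIM('a) \<phi> \<alpha> < \<infinity>"
    and "Lambda_upper DIM('a) \<phi> \<alpha> < \<infinity>"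
    and "0 < \<theta>" and "\<theta> < 1"
  shows "\<exists>C>0. \<forall>(\<Omega>::'a set) u.
     open \<Omega> \<and> connected \<Omega> \<and> \<Omega> \<noteq> {} \<and> globally_regular \<theta> \<Omega> \<and>
     in_besov \<alpha> \<phi> \<Omega> u \<and>
     (emeasure lebesgue \<Omega> < \<infinity> \<longrightarrow>
        (\<forall>x\<in>\<Omega>. u x \<ge> 0) \<and>
        emeasure lebesgue {x\<in>\<Omega>. u x = 0} \<ge> emeasure lebesgue \<Omega> / 2) \<and>
     (emeasure lebesgue \<Omega> = \<infinity> \<longrightarrow>
        (\<forall>x\<in>\<Omega>. u x \<ge> 0) \<and>
        (\<forall>a>0. emeasure lebesgue {x\<in>\<Omega>. u x > a} < \<infinity>))
     \<longrightarrow> Lp_norm \<Omega> (real DIM('a) / \<bar>\<alpha>\<bar>) u \<le> ennreal (C * besov_norm \<alpha> \<phi> \<Omega> u)"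
proof -
  have al: "\<alpha> < 0" and yf: "young_function \<phi>" and th: "\<theta> > 0" using assms by auto
  obtain Cu where Cu: "Cu \<ge> 1" and upper: "\<forall>x>0. \<forall>T\<ge>1. \<phi> (T powr (-\<alpha>) * x) \<le> Cu * T ^ DIM('a) * \<phi> x"
    using upper_type[OF yf al assms(6)] by blast
  define q where "q = real DIM('a) / (-\<alpha>)"
  have q0: "q > 0" unfolding q_def using al by (intro divide_pos_pos) auto
  have qabs: "real DIM('a) / \<bar>\<alpha>\<bar> = q" using al by (simp add: q_def)
  define C' where "C' = 2 * Cu * (2/\<theta>)^2"
  obtain z where z: "z > 0" "\<phi> z \<ge> 2 powr q * C'"
  proof -
    have "filterlim \<phi> at_top at_top" using yf by (simp add: young_function_def)
    then have "eventually (\<lambda>x. 2 powr q * C' \<le> \<phi> x) at_top" by (simp add: filterlim_at_top)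
    then obtain N where N: "\<And>x. x \<ge> N \<Longrightarrow> 2 powr q * C' \<le> \<phi> x" by (auto simp: eventually_at_top_linorder)
    show ?thesis by (rule that[of "max N 1"]) (use N in auto)
  qed
  define A0 where "A0 = 2 powr q * (\<theta>/2) * z powr q"
  define Kc where "Kc = A0 + 2 powr q * Cu * A0 * C' / \<phi> (((2/\<theta>) * A0) powr (1/q))"
  have A0p: "A0 > 0" unfolding A0_def using th z by (intro mult_pos_pos) auto
  have Kcp: "Kc > 0"
  proof -
    have "\<phi> (((2/\<theta>) * A0) powr (1/q)) > 0" using A0p th by (intro yf_pos[OF yf]) simp
    moreover have "C' > 0" unfolding C'_def using Cu th by simp
    ultimately have "2 powr q * Cu * A0 * C' / \<phi> (((2/\<theta>) * A0) powr (1/q)) \<ge> 0" using Cu A0p by simp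
    then show ?thesis unfolding Kc_def using A0p by linarith
  qed
  define K4 where "K4 = 4 powr q * Kc"
  have K4p: "K4 > 0" unfolding K4_def using Kcp by simp
  define C where "C = K4 powr (1/q)"
  show ?thesis
  proof (intro exI[of _ C] conjI allI impI)
    show "C > 0" unfolding C_def using K4p by simp
  next
    fix \<Omega> :: "'a set" and u :: "'a \<Rightarrow> real"
    assume H: "open \<Omega> \<and> connected \<Omega> \<and> \<Omega> \<noteq> {} \<and> globally_regular \<theta> \<Omega> \<and>
     in_besov \<alpha> \<phi> \<Omega> u \<and>
     (emeasure lebesgue \<Omega> < \<infinity> \<longrightarrow>
        (\<forall>x\<in>\<Omega>. u x \<ge> 0) \<and>
        emeasure lebesgue {x\<in>\<Omega>. u x = 0} \<ge> emeasure lebesgue \<Omega> / 2) \<and>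
     (emeasure lebesgue \<Omega> = \<infinity> \<longrightarrow>
        (\<forall>x\<in>\<Omega>. u x \<ge> 0) \<and>
        (\<forall>a>0. emeasure lebesgue {x\<in>\<Omega>. u x > a} < \<infinity>))"
    then have op: "open \<Omega>" and reg: "globally_regular \<theta> \<Omega>" and inb: "in_besov \<alpha> \<phi> \<Omega> u"
      and Hf: "emeasure lebesgue \<Omega> < \<infinity> \<longrightarrow> (\<forall>x\<in>\<Omega>. u x \<ge> 0) \<and>
        emeasure lebesgue {x\<in>\<Omega>. u x = 0} \<ge> emeasure lebesgue \<Omega> / 2"
      and Hi: "emeasure lebesgue \<Omega> = \<infinity> \<longrightarrow> (\<forall>x\<in>\<Omega>. u x \<ge> 0) \<and>
        (\<forall>a>0. emeasure lebesgue {x\<in>\<Omega>. u x > a} < \<infinity>)" by blast+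
    have Om[measurable]: "\<Omega> \<in> sets lebesgue"
      using sets_completionI_sets[of \<Omega> lborel] borel_open[OF op] by simp
    have um: "(\<lambda>x. indicator \<Omega> x * u x) \<in> borel_measurable lebesgue"
    proof -
      have "set_borel_measurable lebesgue \<Omega> u" using inb unfolding in_besov_def by blast
      then show ?thesis unfolding set_borel_measurable_def real_scaleR_def .
    qed
    have cases: "emeasure lebesgue \<Omega> < \<infinity> \<or> emeasure lebesgue \<Omega> = \<infinity>"
    proof (cases "emeasure lebesgue \<Omega> = \<infinity>")
      case False then show ?thesis by (simp add: less_top[symmetric])
    qed simp
    have upos: "\<forall>x\<in>\<Omega>. u x \<ge> 0" using cases Hf Hi by blast
    have ufin: "emeasure lebesgue {x\<in>\<Omega>. a < u x} < \<infinity>" if a: "a > 0" for a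
    proof (cases "emeasure lebesgue \<Omega> < \<infinity>")
      case True
      have "{x\<in>\<Omega>. a < u x} \<subseteq> \<Omega>" by auto
      then have "emeasure lebesgue {x\<in>\<Omega>. a < u x} \<le> emeasure lebesgue \<Omega>" by (rule emeasure_mono) simp
      then show ?thesis using True by (rule le_less_trans)
    next
      case False
      then show ?thesis using Hi a cases by auto
    qed
    define S where "S = {lam. lam > 0 \<and> besov_modular \<alpha> \<phi> \<Omega> u lam \<le> 1}"
    have Sne: "S \<noteq> {}" using inb unfolding in_besov_def S_def by auto
    have key: "(\<integral>\<^sup>+x\<in>\<Omega>. ennreal (\<bar>u x\<bar> powr q) \<partial>lebesgue) \<le> ennreal (lam powr q * K4)" if lamS: "lam \<in> S" for lam
    proof -
      have lam: "lam > 0" and modu: "besov_modular \<alpha> \<phi> \<Omega> u lam \<le> 1" using lamS by (auto simp: S_def)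
      define v where "v x = indicator \<Omega> x * u x / lam" for x
      have vm[measurable]: "v \<in> borel_measurable lebesgue" unfolding v_def using um by measurable
      have vO: "v x = u x / lam" if "x \<in> \<Omega>" for x using that by (simp add: v_def)
      have vpos: "\<forall>x\<in>\<Omega>. v x \<ge> 0" using upos lam vO by simp
      have lev: "{x\<in>\<Omega>. a < v x} = {x\<in>\<Omega>. a * lam < u x}" for a
        using vO lam by (auto simp: pos_less_divide_eq)
      have vfin: "\<forall>a>0. emeasure lebesgue {x\<in>\<Omega>. a < v x} < \<infinity>"
        using ufin lam unfolding lev by simp
      have zer: "{x\<in>\<Omega>. v x = 0} = {x\<in>\<Omega>. u x = 0}" using vO lam by auto
      have vhalf: "emeasure lebesgue \<Omega> < \<infinity> \<longrightarrow> emeasure lebesgue {x\<in>\<Omega>. v x = 0} \<ge> emeasure lebesgue \<Omega> / 2"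
        using Hf unfolding zer by blast
      note cmpv = cmp_lemma[OF reg Om vm vpos vfin vhalf]
      have meq: "besov_modular \<alpha> \<phi> \<Omega> v 1 = besov_modular \<alpha> \<phi> \<Omega> u lam"
        unfolding besov_modular_def
      proof (rule nn_integral_cong)
        fix x
        show "(\<integral>\<^sup>+y\<in>\<Omega>. ennreal (\<phi> (\<bar>v x - v y\<bar> / (1 * dist x y powr \<alpha>)) / dist x y ^ (2 * DIM('a))) \<partial>lebesgue) * indicator \<Omega> x
            = (\<integral>\<^sup>+y\<in>\<Omega>. ennreal (\<phi> (\<bar>u x - u y\<bar> / (lam * dist x y powr \<alpha>)) / dist x y ^ (2 * DIM('a))) \<partial>lebesgue) * indicator \<Omega> x"
        proof (cases "x \<in> \<Omega>")
          case True
          have "(\<integral>\<^sup>+y\<in>\<Omega>. ennreal (\<phi> (\<bar>v x - v y\<bar> / (1 * dist x y powr \<alpha>)) / dist x y ^ (2 * DIM('a))) \<partial>lebesgue)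
            = (\<integral>\<^sup>+y\<in>\<Omega>. ennreal (\<phi> (\<bar>u x - u y\<bar> / (lam * dist x y powr \<alpha>)) / dist x y ^ (2 * DIM('a))) \<partial>lebesgue)"
          proof (rule nn_integral_cong)
            fix y
            show "ennreal (\<phi> (\<bar>v x - v y\<bar> / (1 * dist x y powr \<alpha>)) / dist x y ^ (2 * DIM('a))) * indicator \<Omega> y
              = ennreal (\<phi> (\<bar>u x - u y\<bar> / (lam * dist x y powr \<alpha>)) / dist x y ^ (2 * DIM('a))) * indicator \<Omega> y"
            proof (cases "y \<in> \<Omega>")
              case True
              have "\<bar>v x - v y\<bar> / (1 * dist x y powr \<alpha>) = \<bar>u x - u y\<bar> / (lam * dist x y powr \<alpha>)"
              proof -
                have "v x - v y = (u x - u y) / lam"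
                  using vO[OF \<open>x \<in> \<Omega>\<close>] vO[OF True] by (simp add: diff_divide_distrib)
                then have "\<bar>v x - v y\<bar> = \<bar>u x - u y\<bar> / lam" using lam by simp
                then show ?thesis by simp
              qed
              then show ?thesis by simp
            qed simp
          qed
          then show ?thesis by simp
        qed simp
      qed
      have modv: "besov_modular \<alpha> \<phi> \<Omega> v 1 \<le> 1" using meq modu by simp
      have core: "(\<integral>\<^sup>+x\<in>\<Omega>. ennreal (v x powr q) \<partial>lebesgue) \<le> ennreal K4"
        unfolding K4_def
        by (rule core_full[OF yf al th Cu upper Om vm vpos vfin cmpv modv q_def C'_def z A0_def Kc_def])
      have "(\<integral>\<^sup>+x\<in>\<Omega>. ennreal (\<bar>u x\<bar> powr q) \<partial>lebesgue) = (\<integral>\<^sup>+x. ennreal (lam powr q) * (ennreal (v x powr q) * indicator \<Omega> x) \<partial>lebesgue)"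
      proof (rule nn_integral_cong)
        fix x show "ennreal (\<bar>u x\<bar> powr q) * indicator \<Omega> x = ennreal (lam powr q) * (ennreal (v x powr q) * indicator \<Omega> x)"
        proof (cases "x \<in> \<Omega>")
          case True
          have "\<bar>u x\<bar> = lam * v x" using vO[OF True] upos True lam by simp
          then have "\<bar>u x\<bar> powr q = lam powr q * v x powr q" by (simp add: powr_mult)
          then show ?thesis using True by (simp add: ennreal_mult)
        qed simp
      qed
      also have "\<dots> = ennreal (lam powr q) * (\<integral>\<^sup>+x\<in>\<Omega>. ennreal (v x powr q) \<partial>lebesgue)"
        by (rule nn_integral_cmult) measurable
      also have "\<dots> \<le> ennreal (lam powr q) * ennreal K4" using core by (intro mult_left_mono) auto
      also have "\<dots> = ennreal (lam powr q * K4)" using K4p by (simp add: ennreal_mult)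
      finally show ?thesis .
    qed
    obtain lam0 where lam0: "lam0 \<in> S" using Sne by auto
    define I where "I = (\<integral>\<^sup>+x\<in>\<Omega>. ennreal (\<bar>u x\<bar> powr q) \<partial>lebesgue)"
    have Ifin: "I \<noteq> \<infinity>" using key[OF lam0] unfolding I_def
      by (metis ennreal_neq_top infinity_ennreal_def neq_top_trans)
    define Ir where "Ir = enn2real I"
    have IIr: "I = ennreal Ir" unfolding Ir_def using Ifin by (simp add: ennreal_enn2real_if)
    have Ir0: "Ir \<ge> 0" by (simp add: Ir_def)
    have Lp: "Lp_norm \<Omega> (real DIM('a) / \<bar>\<alpha>\<bar>) u = ennreal (Ir powr (1/q))"
      unfolding Lp_norm_def Let_def qabs I_def[symmetric] using Ifin by (simp add: Ir_def)
    have bound: "Ir powr (1/q) / C \<le> lam" if lamS: "lam \<in> S" for lam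
    proof -
      have lam: "lam > 0" using lamS by (simp add: S_def)
      have "ennreal Ir \<le> ennreal (lam powr q * K4)" using key[OF lamS] IIr unfolding I_def by simp
      then have "Ir \<le> lam powr q * K4" using lam K4p by (simp add: ennreal_le_iff)
      then have "Ir powr (1/q) \<le> (lam powr q * K4) powr (1/q)" using Ir0 q0 by (intro powr_mono2) auto
      also have "\<dots> = lam * C" unfolding C_def using lam q0 by (simp add: powr_mult powr_powr)
      finally show ?thesis using K4p unfolding C_def by (simp add: divide_le_eq mult.commute)
    qed
    have "Ir powr (1/q) / C \<le> Inf S" by (rule cInf_greatest[OF Sne bound])
    then have "Ir powr (1/q) \<le> C * besov_norm \<alpha> \<phi> \<Omega> u"
      unfolding besov_norm_def S_def[symmetric] using K4p unfolding C_def by (simp add: divide_le_eq mult.commute)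
    then show "Lp_norm \<Omega> (real DIM('a) / \<bar>\<alpha>\<bar>) u \<le> ennreal (C * besov_norm \<alpha> \<phi> \<Omega> u)"
      unfolding Lp by (rule ennreal_leI)
  qed
qed

end
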